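(* Let $p\in[1,\infty)$, let $0 < \mathsf{D}_1 \le \mathsf{D}_2$ and $\mathsf{K}>0$ be reals, and let $x\in\{-\Delta,\dots,\Delta\}^d$ with $x\ne 0$. Let $u_1,\dots,u_d$ be independent $\mathrm{Exp}(1)$ random variables and, for $t\in\mathbb{R}$ and $\sigma\in\{-1,1\}$, let $G_{x,u}(t,\sigma)=\{i\in[d] : x_i\sigma/u_i^{1/p}\ge t\}$. Then $$\Pr_{u}\left[1 \le \Big|\bigcup_{\sigma\in\{-1,1\}} G_{x,u}\big(\|x\|_p/\mathsf{D}_1,\sigma\big)\Big| \le \Big|\bigcup_{\sigma\in\{-1,1\}} G_{x,u}\big(\|x\|_p/\mathsf{D}_2,\sigma\big)\Big| \le \mathsf{K}\right] \ge 1-\exp(-\mathsf{D}_1^p)-\frac{\mathsf{D}_2^p}{\mathsf{K}}.$$ In particular, for $\delta_2\in(0,1)$, $\mathsf{D}_1=\ln(2/\delta_2)^{1/p}$, $\mathsf{D}_2=2\mathsf{D}_1$ and $\mathsf{K}=2\mathsf{D}_2^p/\delta_2$, the probability is at least $1-\delta_2$.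
   Context: $\mathrm{Exp}(1)$ denotes the exponential distribution with rate $1$, i.e. $\Pr[u > a] = e^{-a}$ for $a\ge 0$. *)

theory Defs
  imports "HOL-Probability.Probability"
begin

text \<open>Joint law of d independent Exp(1) random variables u_0,...,u_{d-1}
  (coordinates indexed by {..<d}, standing for [d]).\<close>
definition exp_prod :: "nat \<Rightarrow> (nat \<Rightarrow> real) measure" where
  "exp_prod d = PiM {..<d} (\<lambda>_. density lborel (exponential_density 1))"

definition lp_norm :: "real \<Rightarrow> nat \<Rightarrow> (nat \<Rightarrow> int) \<Rightarrow> real" where
  "lp_norm p d x = (\<Sum>i<d. \<bar>real_of_int (x i)\<bar> powr p) powr (1 / p)"

definition G_set :: "real \<Rightarrow> nat \<Rightarrow> (nat \<Rightarrow> int) \<Rightarrow> (nat \<Rightarrow> real) \<Rightarrow> real \<Rightarrow> real \<Rightarrow> nat set" where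
  "G_set p d x u t \<sigma> = {i \<in> {..<d}. real_of_int (x i) * \<sigma> / (u i powr (1 / p)) \<ge> t}"

definition G_union :: "real \<Rightarrow> nat \<Rightarrow> (nat \<Rightarrow> int) \<Rightarrow> (nat \<Rightarrow> real) \<Rightarrow> real \<Rightarrow> nat set" where
  "G_union p d x u t = (\<Union>\<sigma>\<in>{-1, 1::real}. G_set p d x u t \<sigma>)"

definition event_prob :: "real \<Rightarrow> nat \<Rightarrow> (nat \<Rightarrow> int) \<Rightarrow> real \<Rightarrow> real \<Rightarrow> real \<Rightarrow> real" where
  "event_prob p d x D1 D2 K = measure (exp_prod d)
     {u \<in> space (exp_prod d).
        1 \<le> card (G_union p d x u (lp_norm p d x / D1)) \<and>
        card (G_union p d x u (lp_norm p d x / D1)) \<le> card (G_union p d x u (lp_norm p d x / D2)) \<and>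
        real (card (G_union p d x u (lp_norm p d x / D2))) \<le> K}"

end

theory Submission
  imports Defs
begin

abbreviation EN :: "real measure" where "EN \<equiv> density lborel (exponential_density 1)"

lemma EN_prob: "prob_space EN" by (rule prob_space_exponential_density) simp

lemma EN_le: assumes c: "0 \<le> c" shows "measure EN {..c} = 1 - exp (-c)"
proof -
  have "emeasure EN {..c} = ennreal (erlang_CDF 0 1 c)"
    using emeasure_erlang_density[of 1 0 c] by simp
  moreover have "0 \<le> 1 - exp (-c)" using c by simp
  ultimately show ?thesis using c by (simp add: measure_def erlang_CDF_0)
qed

lemma EN_tail: assumes c: "0 \<le> c" shows "measure EN ({..0} \<union> {c<..}) \<le> exp (-c)"
proof -
  interpret EN: prob_space EN by (rule EN_prob)
  have "measure EN ({..0} \<union> {c<..}) \<le> measure EN {..0} + measure EN {c<..}"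
    by (rule measure_Un_le) auto
  moreover have "measure EN {..0} = 0" using EN_le[of 0] by simp
  moreover have "measure EN {c<..} = 1 - measure EN {..c}"
  proof -
    have "{c<..} = space EN - {..c}" by auto
    then show ?thesis using EN.prob_compl[of "{..c}"] by simp
  qed
  ultimately show ?thesis using EN_le[OF c] by simp
qed

lemma key:
  fixes a u t p :: real
  assumes a: "0 \<le> a" and u: "0 < u" and t: "0 < t" and p: "1 \<le> p"
  shows "t \<le> a / u powr (1/p) \<longleftrightarrow> u \<le> (a/t) powr p"
proof -
  define v where "v = u powr (1/p)"
  have v: "0 < v" using u by (simp add: v_def)
  have vp: "v powr p = u" using u p by (simp add: v_def powr_powr)
  have "t \<le> a / v \<longleftrightarrow> v \<le> a / t" using v t by (simp add: field_simps)
  also have "\<dots> \<longleftrightarrow> v powr p \<le> (a/t) powr p"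
  proof
    assume "v \<le> a / t" then show "v powr p \<le> (a/t) powr p" using v p by (intro powr_mono2) auto
  next
    assume "v powr p \<le> (a/t) powr p" then show "v \<le> a / t"
      using v p a t by (metis not_le powr_less_mono2 less_le_trans zero_less_one less_eq_real_def divide_nonneg_pos)
  qed
  finally show ?thesis using vp by (simp add: v_def)
qed


lemma part1:
  fixes p :: real and d :: nat and x :: "nat \<Rightarrow> int" and D1 D2 K :: real
  assumes p: "1 \<le> p" and x0: "\<exists>i<d. x i \<noteq> 0" and D1: "0 < D1" and D12: "D1 \<le> D2" and K: "0 < K"
  shows "event_prob p d x D1 D2 K \<ge> 1 - exp (- (D1 powr p)) - D2 powr p / K"
proof -
  define M where "M = exp_prod d"
  have Mdef: "M = PiM {..<d} (\<lambda>_. EN)" unfolding M_def exp_prod_def ..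
  interpret P: finite_product_prob_space "\<lambda>_. EN" "{..<d}"
  proof -
    have sf: "sigma_finite_measure EN" using EN_prob by (rule prob_space_imp_sigma_finite)
    show "finite_product_prob_space (\<lambda>_. EN) {..<d}"
      by (simp add: finite_product_prob_space_def finite_product_sigma_finite_def
          product_sigma_finite_def product_prob_space_def product_prob_space_axioms_def
          finite_product_sigma_finite_axioms_def sf EN_prob)
  qed
  interpret M: prob_space M unfolding Mdef by (rule prob_space_PiM) (rule EN_prob)
  have spM: "space M = PiE {..<d} (\<lambda>_. UNIV)" unfolding Mdef by (simp add: space_PiM)
  define S where "S = (\<Sum>i<d. \<bar>real_of_int (x i)\<bar> powr p)"
  have S: "0 < S"
  proof -
    obtain j where j: "j < d" "x j \<noteq> 0" using x0 by blast
    have "0 < \<bar>real_of_int (x j)\<bar> powr p" using j by simp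
    also have "\<dots> \<le> S" unfolding S_def by (rule member_le_sum) (use j in auto)
    finally show ?thesis .
  qed
  define nx where "nx = lp_norm p d x"
  have nx: "nx = S powr (1/p)" unfolding nx_def lp_norm_def S_def ..
  have nxpos: "0 < nx" using S by (simp add: nx)
  have nxp: "nx powr p = S" using S p by (simp add: nx powr_powr)
  define c where "c D i = (\<bar>real_of_int (x i)\<bar> / (nx / D)) powr p" for D i
  have c_nonneg: "0 \<le> c D i" for D i by (simp add: c_def)
  have sumc: "(\<Sum>i<d. c D i) = D powr p" if D: "0 < D" for D
  proof -
    have "(\<Sum>i<d. c D i) = (\<Sum>i<d. \<bar>real_of_int (x i)\<bar> powr p / (nx / D) powr p)"
      unfolding c_def using D nxpos by (simp add: powr_divide powr_mult)
    also have "\<dots> = S / (nx / D) powr p" unfolding S_def by (simp add: sum_divide_distrib)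
    also have "(nx / D) powr p = S / D powr p" using D nxpos by (simp add: powr_divide nxp)
    finally show ?thesis using S D by simp
  qed
  define t1 where "t1 = nx / D1"
  define t2 where "t2 = nx / D2"
  have t2: "0 < t2" using nxpos D1 D12 by (simp add: t2_def)
  have t12: "t2 \<le> t1" unfolding t1_def t2_def using nxpos D1 D12 by (simp add: frac_le)
  have t1: "0 < t1" using t2 t12 by simp
  define Q where "Q t u i \<longleftrightarrow> t \<le> real_of_int (x i) * (-1) / u i powr (1/p) \<or> t \<le> real_of_int (x i) * 1 / u i powr (1/p)" for t u i
  have Gu: "G_union p d x u t = {i\<in>{..<d}. Q t u i}" for u t
    unfolding G_union_def G_set_def Q_def by auto
  define h where "h t u = (\<Sum>i<d. if Q t u i then 1 else 0 :: real)" for t u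
  have card_eq: "real (card (G_union p d x u t)) = h t u" for u t
  proof -
    have "card {i\<in>{..<d}. Q t u i} = (\<Sum>i\<in>{i\<in>{..<d}. Q t u i}. 1)" by simp
    also have "\<dots> = (\<Sum>i<d. if Q t u i then 1 else 0)" by (subst sum.inter_filter) auto
    finally show ?thesis unfolding Gu h_def by (simp add: if_distrib cong: if_cong)
  qed
  have h_meas: "h t \<in> borel_measurable M" for t
    unfolding h_def
  proof (rule borel_measurable_sum)
    fix i assume i: "i \<in> {..<d}"
    have "(\<lambda>u. u i) \<in> measurable M borel" unfolding Mdef
      using measurable_component_singleton[OF i, of "\<lambda>_. EN"] by simp
    moreover have "(\<lambda>v::real. if t \<le> real_of_int (x i) * (-1) / v powr (1/p) \<or> t \<le> real_of_int (x i) * 1 / v powr (1/p) then 1 else 0 :: real) \<in> borel_measurable borel"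
      by measurable
    ultimately show "(\<lambda>u. if Q t u i then 1 else 0 :: real) \<in> borel_measurable M"
      unfolding Q_def by (rule measurable_compose)
  qed
  define E where "E = {u\<in>space M. 1 \<le> h t1 u \<and> h t1 u \<le> h t2 u \<and> h t2 u \<le> K}"
  have Eeq: "event_prob p d x D1 D2 K = measure M E"
  proof -
    show ?thesis
      unfolding event_prob_def E_def M_def[symmetric] nx_def[symmetric] t1_def[symmetric] t2_def[symmetric]
      unfolding card_eq[symmetric] by simp
  qed
  note hm1[measurable] = h_meas[of t1]
  note hm2[measurable] = h_meas[of t2]
  have E_sets: "E \<in> sets M"
  proof -
    have "E = {u\<in>space M. (\<lambda>_. 1) u \<le> h t1 u} \<inter> {u\<in>space M. h t1 u \<le> h t2 u} \<inter> {u\<in>space M. h t2 u \<le> (\<lambda>_. K) u}"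
      unfolding E_def by auto
    also have "\<dots> \<in> sets M"
      by (intro sets.Int borel_measurable_le hm1 hm2 borel_measurable_const)
    finally show ?thesis .
  qed
  define A where "A = {u\<in>space M. \<forall>i<d. u i \<le> 0 \<or> c D1 i < u i}"
  have A_eq: "A = PiE {..<d} (\<lambda>i. {..0} \<union> {c D1 i<..})"
  proof (rule set_eqI)
    fix u
    show "u \<in> A \<longleftrightarrow> u \<in> PiE {..<d} (\<lambda>i. {..0} \<union> {c D1 i<..})"
      unfolding A_def spM PiE_iff by (simp, blast)
  qed
  have A_meas: "measure M A \<le> exp (- (D1 powr p))"
  proof -
    have "measure M A = (\<Prod>i<d. measure EN ({..0} \<union> {c D1 i<..}))"
      unfolding A_eq Mdef by (rule P.finite_measure_PiM_emb) auto
    also have "\<dots> \<le> (\<Prod>i<d. exp (- c D1 i))"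
      by (rule prod_mono) (auto intro: EN_tail c_nonneg)
    also have "\<dots> = exp (- (\<Sum>i<d. c D1 i))" by (subst sum_negf[symmetric], subst exp_sum) auto
    finally show ?thesis using sumc[OF D1] by simp
  qed
  have A_sets: "A \<in> sets M" unfolding A_eq Mdef by (rule sets_PiM_I_finite) auto
  define g where "g u = (\<Sum>i<d. indicator {..c D2 i} (u i) :: real)" for u
  have comp: "(\<lambda>u. f (u i)) \<in> borel_measurable M" if i: "i < d" and f: "f \<in> borel_measurable borel" for f :: "real \<Rightarrow> real" and i
  proof -
    have "(\<lambda>u. u i) \<in> measurable M borel" unfolding Mdef
      using measurable_component_singleton[of i "{..<d}" "\<lambda>_. EN"] i by simp
    then show ?thesis using f by (rule measurable_compose)
  qed
  have g_meas: "g \<in> borel_measurable M" unfolding g_def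
    by (rule borel_measurable_sum) (auto intro!: comp)
  define B where "B = {u\<in>space M. K \<le> g u}"
  note gm[measurable] = g_meas
  have B_sets: "B \<in> sets M" unfolding B_def
    by (rule borel_measurable_le[where f="\<lambda>_. K", OF borel_measurable_const gm])
  have int_i: "integral\<^sup>L M (\<lambda>u. indicator {..c D2 i} (u i) :: real) = measure EN {..c D2 i}" if i: "i < d" for i
  proof -
    have "integral\<^sup>L M (\<lambda>u. indicator {..c D2 i} (u i) :: real) = integral\<^sup>L (distr M EN (\<lambda>u. u i)) (indicator {..c D2 i})"
      by (rule integral_distr[symmetric]) (auto simp: Mdef i)
    also have "distr M EN (\<lambda>u. u i) = EN" unfolding Mdef using i by (intro P.PiM_component) auto
    finally show ?thesis by simp
  qed
  have B_meas: "measure M B \<le> D2 powr p / K"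
  proof -
    have "measure M B \<le> integral\<^sup>L M g / K" unfolding B_def
    proof (rule integral_Markov_inequality_measure[OF _ _ _ K])
      show "integrable M g"
      proof (rule M.integrable_const_bound[where B="real d"])
        show "AE u in M. norm (g u) \<le> real d"
        proof (rule AE_I2)
          fix u
          have "norm (g u) = g u" unfolding g_def by (simp add: sum_nonneg)
          also have "\<dots> \<le> (\<Sum>i<d. 1)" unfolding g_def by (rule sum_mono) (simp add: indicator_def)
          finally show "norm (g u) \<le> real d" by simp
        qed
      qed (rule g_meas)
    qed (auto simp: g_def sum_nonneg)
    also have "integral\<^sup>L M g = (\<Sum>i<d. measure EN {..c D2 i})"
    proof -
      have int_ok: "integrable M (\<lambda>u. indicator {..c D2 i} (u i) :: real)" if i: "i < d" for i
        by (rule M.integrable_const_bound[where B=1]) (use i in \<open>auto intro!: comp simp: indicator_def\<close>)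
      have "integral\<^sup>L M g = (\<Sum>i<d. integral\<^sup>L M (\<lambda>u. indicator {..c D2 i} (u i) :: real))"
        unfolding g_def using int_ok by simp
      then show ?thesis by (simp add: int_i)
    qed
    also have "\<dots> \<le> (\<Sum>i<d. c D2 i)"
    proof (rule sum_mono)
      fix i
      have "1 + (- c D2 i) \<le> exp (- c D2 i)" by (rule exp_ge_add_one_self)
      then show "measure EN {..c D2 i} \<le> c D2 i" by (simp add: EN_le c_nonneg)
    qed
    finally show ?thesis using sumc[of D2] D1 D12 K by (simp add: divide_right_mono)
  qed
  have incl: "space M - E \<subseteq> A \<union> B"
  proof
    fix u assume u: "u \<in> space M - E"
    let ?U1 = "G_union p d x u t1" and ?U2 = "G_union p d x u t2"
    have sub: "?U1 \<subseteq> ?U2" unfolding Gu Q_def using t12 by auto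
    have fin: "finite ?U2" unfolding Gu by auto
    have cle: "card ?U1 \<le> card ?U2" using card_mono[OF fin sub] .
    have "\<not> (1 \<le> h t1 u \<and> h t1 u \<le> h t2 u \<and> h t2 u \<le> K)" using u unfolding E_def by auto
    then have "card ?U1 = 0 \<or> K < real (card ?U2)" using cle unfolding card_eq[symmetric] by auto
    then show "u \<in> A \<union> B"
    proof
      assume "card ?U1 = 0"
      then have empty: "?U1 = {}" using fin sub by (meson card_0_eq finite_subset)
      have "\<forall>i<d. u i \<le> 0 \<or> c D1 i < u i"
      proof (intro allI impI)
        fix i assume i: "i < d"
        show "u i \<le> 0 \<or> c D1 i < u i"
        proof (rule ccontr)
          assume "\<not> ?thesis"
          then have ui: "0 < u i" "u i \<le> c D1 i" by auto
          have xi: "x i \<noteq> 0"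
          proof
            assume "x i = 0" then have "c D1 i = 0" by (simp add: c_def)
            then show False using ui by simp
          qed
          have "t1 \<le> \<bar>real_of_int (x i)\<bar> / u i powr (1/p)"
            using key[of "\<bar>real_of_int (x i)\<bar>" "u i" t1 p] ui t1 p unfolding c_def t1_def by simp
          then have "Q t1 u i" unfolding Q_def by (cases "x i \<ge> 0") auto
          then have "i \<in> ?U1" unfolding Gu using i by auto
          then show False using empty by simp
        qed
      qed
      then show ?thesis using u unfolding A_def by auto
    next
      assume K2: "K < real (card ?U2)"
      have sub2: "?U2 \<subseteq> {i\<in>{..<d}. u i \<le> c D2 i}"
      proof
        fix i assume "i \<in> ?U2"
        then have i: "i < d" "Q t2 u i" unfolding Gu by auto
        show "i \<in> {i\<in>{..<d}. u i \<le> c D2 i}"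
        proof (cases "u i \<le> 0")
          case True then show ?thesis using i c_nonneg[of D2 i] by auto
        next
          case False
          then have ui: "0 < u i" by simp
          have vpos: "0 < u i powr (1/p)" using ui by simp
          have "real_of_int (x i) * (-1) / u i powr (1/p) \<le> \<bar>real_of_int (x i)\<bar> / u i powr (1/p)"
               "real_of_int (x i) * 1 / u i powr (1/p) \<le> \<bar>real_of_int (x i)\<bar> / u i powr (1/p)"
            using vpos by (intro divide_right_mono; simp)+
          then have "t2 \<le> \<bar>real_of_int (x i)\<bar> / u i powr (1/p)" using i(2) unfolding Q_def by linarith
          then have "u i \<le> c D2 i"
            using key[of "\<bar>real_of_int (x i)\<bar>" "u i" t2 p] ui t2 p unfolding c_def t2_def by simp
          then show ?thesis using i by auto
        qed
      qed
      have "real (card ?U2) \<le> real (card {i\<in>{..<d}. u i \<le> c D2 i})"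
        using card_mono[OF _ sub2] by simp
      also have "\<dots> = g u"
      proof -
        have "real (card {i\<in>{..<d}. u i \<le> c D2 i}) = (\<Sum>i\<in>{i\<in>{..<d}. u i \<le> c D2 i}. (1::real))" by simp
        also have "\<dots> = (\<Sum>i<d. if u i \<le> c D2 i then 1 else 0)" by (rule sum.inter_filter) simp
        also have "\<dots> = g u" unfolding g_def by (rule sum.cong) (auto simp: indicator_def)
        finally show ?thesis .
      qed
      finally have "K \<le> g u" using K2 by simp
      then show ?thesis using u unfolding B_def by auto
    qed
  qed
  have "measure M (space M - E) \<le> measure M (A \<union> B)"
    by (rule M.finite_measure_mono[OF incl]) (use A_sets B_sets in auto)
  also have "\<dots> \<le> measure M A + measure M B" by (rule measure_Un_le[OF A_sets B_sets])
  finally have "1 - measure M E \<le> measure M A + measure M B"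
    using M.prob_compl[OF E_sets] by simp
  then show ?thesis using Eeq A_meas B_meas by simp
qed

theorem mainTheorem4:
  fixes p :: real and d :: nat and \<Delta> :: int and x :: "nat \<Rightarrow> int"
  assumes "1 \<le> p"
    and "\<forall>i<d. -\<Delta> \<le> x i \<and> x i \<le> \<Delta>"
    and "\<exists>i<d. x i \<noteq> 0"
  shows "(\<forall>D1 D2 K. 0 < D1 \<longrightarrow> D1 \<le> D2 \<longrightarrow> 0 < K \<longrightarrow>
            event_prob p d x D1 D2 K \<ge> 1 - exp (- (D1 powr p)) - D2 powr p / K)
       \<and> (\<forall>\<delta>2. 0 < \<delta>2 \<longrightarrow> \<delta>2 < 1 \<longrightarrow>
            (let D1 = ln (2 / \<delta>2) powr (1 / p); D2 = 2 * D1; K = 2 * D2 powr p / \<delta>2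
             in event_prob p d x D1 D2 K \<ge> 1 - \<delta>2))"
proof (intro conjI allI impI)
  fix D1 D2 K :: real assume "0 < D1" "D1 \<le> D2" "0 < K"
  then show "event_prob p d x D1 D2 K \<ge> 1 - exp (- (D1 powr p)) - D2 powr p / K"
    using part1 assms(1,3) by blast
next
  fix \<delta> :: real assume d0: "0 < \<delta>" and d1: "\<delta> < 1"
  define L where "L = ln (2 / \<delta>)"
  have L: "0 < L" unfolding L_def using d0 d1 by simp
  define D1 where "D1 = L powr (1/p)"
  define D2 where "D2 = 2 * D1"
  define K where "K = 2 * D2 powr p / \<delta>"
  have p: "1 \<le> p" by (rule assms(1))
  have D1: "0 < D1" using L by (simp add: D1_def)
  have D1p: "D1 powr p = L" using L p by (simp add: D1_def powr_powr)
  have D2p: "0 < D2 powr p" using D1 by (simp add: D2_def)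
  have K: "0 < K" using D2p d0 by (simp add: K_def)
  have D12: "D1 \<le> D2" using D1 by (simp add: D2_def)
  have e1: "exp (- (D1 powr p)) = \<delta> / 2"
    using d0 by (simp add: D1p L_def exp_minus)
  have e2: "D2 powr p / K = \<delta> / 2" using D2p d0 by (simp add: K_def)
  have "event_prob p d x D1 D2 K \<ge> 1 - exp (- (D1 powr p)) - D2 powr p / K"
    using part1[OF p assms(3) D1 D12 K] .
  then show "let D1 = ln (2 / \<delta>) powr (1 / p); D2 = 2 * D1; K = 2 * D2 powr p / \<delta>
             in event_prob p d x D1 D2 K \<ge> 1 - \<delta>"
    unfolding Let_def D1_def[symmetric] L_def[symmetric] D2_def[symmetric] K_def[symmetric]
    using e1 e2 by simp
qed

end
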